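(* If $G$ is a complete multipartite graph on $2n$ vertices with independence number $\alpha(G)\leq n$, then $G$ contains at least $n!$ perfect matchings.
   Context: A graph $G$ is complete multipartite if there is a partition of $V(G)$ such that two vertices are adjacent if and only if they lie in different parts. $\alpha(G)$ is the size of a largest independent (edge-free) vertex set. A perfect matching is a set of vertex-disjoint edges covering all vertices. *)

theory Defs
  imports Main
begin

definition simple_graph :: "'a set \<Rightarrow> 'a set set \<Rightarrow> bool" where
  "simple_graph V E \<longleftrightarrow> finite V \<and> (\<forall>e\<in>E. e \<subseteq> V \<and> card e = 2)"

definition complete_multipartite :: "'a set \<Rightarrow> 'a set set \<Rightarrow> bool" where
  "complete_multipartite V E \<longleftrightarrow>
     (\<exists>P. (\<forall>A\<in>P. A \<noteq> {}) \<and> \<Union>P = V \<and>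
          (\<forall>A\<in>P. \<forall>B\<in>P. A \<noteq> B \<longrightarrow> A \<inter> B = {}) \<and>
          (\<forall>u\<in>V. \<forall>v\<in>V. {u, v} \<in> E \<longleftrightarrow> (\<exists>A\<in>P. \<exists>B\<in>P. A \<noteq> B \<and> u \<in> A \<and> v \<in> B)))"

definition independent_set :: "'a set \<Rightarrow> 'a set set \<Rightarrow> 'a set \<Rightarrow> bool" where
  "independent_set V E S \<longleftrightarrow> S \<subseteq> V \<and> (\<forall>u\<in>S. \<forall>v\<in>S. {u, v} \<notin> E)"

definition independence_number :: "'a set \<Rightarrow> 'a set set \<Rightarrow> nat" where
  "independence_number V E = Max (card ` {S. independent_set V E S})"

definition perfect_matching :: "'a set \<Rightarrow> 'a set set \<Rightarrow> 'a set set \<Rightarrow> bool" where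
  "perfect_matching V E M \<longleftrightarrow> M \<subseteq> E \<and>
     (\<forall>e\<in>M. \<forall>f\<in>M. e \<noteq> f \<longrightarrow> e \<inter> f = {}) \<and> \<Union>M = V"

end

theory Submission
  imports Defs
begin

definition cm_edges :: "'a set set \<Rightarrow> 'a set set" where
  "cm_edges P = {{u,v} | u v. \<exists>A\<in>P. \<exists>B\<in>P. A \<noteq> B \<and> u \<in> A \<and> v \<in> B}"

lemma fin_pm: "finite V \<Longrightarrow> finite {M. perfect_matching V F M}"
proof -
  assume "finite V"
  have "{M. perfect_matching V F M} \<subseteq> Pow (Pow V)"
    unfolding perfect_matching_def by auto
  then show ?thesis using \<open>finite V\<close> finite_subset by blast
qed

lemma main:
  assumes disj: "\<forall>A\<in>P. \<forall>B\<in>P. A \<noteq> B \<longrightarrow> A \<inter> B = {}"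
  shows "finite V \<Longrightarrow> card V = 2*n \<Longrightarrow> V \<subseteq> \<Union>P \<Longrightarrow> (\<forall>A\<in>P. card (A \<inter> V) \<le> n)
     \<Longrightarrow> fact n \<le> card {M. perfect_matching V (cm_edges P) M}"
proof (induction n arbitrary: V)
  case 0
  then have "V = {}" by simp
  then have "{} \<in> {M. perfect_matching V (cm_edges P) M}"
    unfolding perfect_matching_def by auto
  then have "card {M. perfect_matching V (cm_edges P) M} \<noteq> 0"
    using fin_pm[OF \<open>finite V\<close>] by auto
  then show ?case by simp
next
  case (Suc m)
  let ?F = "cm_edges P"
  have "V \<noteq> {}" using Suc.prems by auto
  then obtain x where x: "x \<in> V" by auto
  then obtain A0 where A0: "A0 \<in> P" "x \<in> A0" using Suc.prems(3) by auto
  let ?K = "(\<lambda>A. card (A \<inter> V)) ` P"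
  have finK: "finite ?K"
    by (rule finite_subset[of _ "{..Suc m}"]) (use Suc.prems(4) in auto)
  have neK: "?K \<noteq> {}" using A0 by auto
  define k where "k = Max ?K"
  obtain A where A: "A \<in> P" "card (A \<inter> V) = k"
    using Max_in[OF finK neK] unfolding k_def by auto
  have kmax: "\<And>B. B \<in> P \<Longrightarrow> card (B \<inter> V) \<le> k"
    unfolding k_def using finK by auto
  have "card (A0 \<inter> V) \<ge> 1"
    using A0 x Suc.prems(1) by (metis IntI card_0_eq finite_Int empty_iff less_one not_le)
  then have k1: "k \<ge> 1" using kmax[OF A0(1)] by simp
  have kle: "k \<le> Suc m" using A Suc.prems(4) by auto
  have "A \<inter> V \<noteq> {}" using A k1 by auto
  then obtain u where u: "u \<in> A" "u \<in> V" by auto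
  define W where "W = V - A"
  have finW: "finite W" using Suc.prems(1) W_def by auto
  have "card V = card (V - A) + card (V \<inter> A)"
    using card_Int_Diff[OF Suc.prems(1), of A] by simp
  then have cardW: "Suc m \<le> card W"
    using A(2) kle Suc.prems(2) unfolding W_def by (simp add: Int_commute)
  define S where "S w = insert {u,w} ` {M. perfect_matching (V - {u,w}) ?F M}" for w
  have IHw: "fact m \<le> card {M. perfect_matching (V - {u,w}) ?F M}" if w: "w \<in> W" for w
  proof (rule Suc.IH)
    show "finite (V - {u, w})" using Suc.prems(1) by auto
    have "u \<noteq> w" using w u unfolding W_def by auto
    then show "card (V - {u, w}) = 2 * m"
      using w u Suc.prems(1,2) unfolding W_def by (simp add: card_Diff_subset)
    show "V - {u, w} \<subseteq> \<Union> P" using Suc.prems(3) by auto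
    show "\<forall>B\<in>P. card (B \<inter> (V - {u, w})) \<le> m"
    proof
      fix B assume B: "B \<in> P"
      show "card (B \<inter> (V - {u, w})) \<le> m"
      proof (cases "B = A")
        case True
        have "B \<inter> (V - {u, w}) \<subseteq> (A \<inter> V) - {u}" using True by auto
        then have "card (B \<inter> (V - {u, w})) \<le> card ((A \<inter> V) - {u})"
          using Suc.prems(1) by (intro card_mono) auto
        also have "\<dots> = k - 1" using A u Suc.prems(1) by simp
        finally show ?thesis using kle by simp
      next
        case False
        show ?thesis
        proof (cases "w \<in> B")
          case True
          have "B \<inter> (V - {u, w}) \<subseteq> (B \<inter> V) - {w}" by auto
          then have "card (B \<inter> (V - {u, w})) \<le> card ((B \<inter> V) - {w})"
            using Suc.prems(1) by (intro card_mono) auto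
          also have "\<dots> = card (B \<inter> V) - 1" using True w W_def Suc.prems(1) by simp
          finally show ?thesis using Suc.prems(4) B by fastforce
        next
          case wB: False
          have "card (B \<inter> V) \<le> m"
          proof (rule ccontr)
            assume "\<not> ?thesis"
            then have cB: "card (B \<inter> V) = Suc m" using Suc.prems(4) B by fastforce
            then have cA: "card (A \<inter> V) = Suc m" using kmax[OF B] kle A by simp
            have dj: "(A \<inter> V) \<inter> (B \<inter> V) = {}" using disj A(1) B False by blast
            have "card ((A \<inter> V) \<union> (B \<inter> V)) = card V"
              using card_Un_disjoint[OF _ _ dj] Suc.prems(1,2) cA cB by simp
            then have "(A \<inter> V) \<union> (B \<inter> V) = V"
              using Suc.prems(1) by (intro card_subset_eq) auto
            then show False using w wB unfolding W_def by auto
          qed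
          moreover have "card (B \<inter> (V - {u, w})) \<le> card (B \<inter> V)"
            using Suc.prems(1) by (intro card_mono) auto
          ultimately show ?thesis by simp
        qed
      qed
    qed
  qed
  have sub: "(\<Union>w\<in>W. S w) \<subseteq> {M. perfect_matching V ?F M}"
  proof
    fix M assume "M \<in> (\<Union>w\<in>W. S w)"
    then obtain w M' where w: "w \<in> W" and M: "M = insert {u,w} M'"
      and pm: "perfect_matching (V - {u,w}) ?F M'" unfolding S_def by auto
    obtain B where B: "B \<in> P" "w \<in> B" using w Suc.prems(3) unfolding W_def by auto
    have "B \<noteq> A" using B w unfolding W_def by auto
    then have "{u,w} \<in> ?F" unfolding cm_edges_def using A(1) B u by blast
    moreover have "\<forall>e\<in>M'. e \<inter> {u,w} = {}" using pm unfolding perfect_matching_def by blast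
    ultimately show "M \<in> {M. perfect_matching V ?F M}"
      using pm w u unfolding perfect_matching_def M W_def by auto
  qed
  have disjS: "\<forall>w\<in>W. \<forall>w'\<in>W. w \<noteq> w' \<longrightarrow> S w \<inter> S w' = {}"
  proof (intro ballI impI)
    fix w w' assume w: "w \<in> W" "w' \<in> W" "w \<noteq> w'"
    show "S w \<inter> S w' = {}"
    proof (rule ccontr)
      assume "S w \<inter> S w' \<noteq> {}"
      then obtain M where M: "M \<in> S w" "M \<in> S w'" by auto
      have "M \<in> {M. perfect_matching V ?F M}" using sub M w by auto
      then have pm: "\<forall>e\<in>M. \<forall>f\<in>M. e \<noteq> f \<longrightarrow> e \<inter> f = {}"
        unfolding perfect_matching_def by auto
      have a: "{u,w} \<in> M" using M(1) unfolding S_def by blast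
      have b: "{u,w'} \<in> M" using M(2) unfolding S_def by blast
      have "{u,w} = {u,w'}" using pm[rule_format, OF a b] by auto
      then show False using w by (metis doubleton_eq_iff)
    qed
  qed
  have cardS: "card (S w) = card {M. perfect_matching (V - {u,w}) ?F M}" for w
    unfolding S_def
  proof (rule card_image)
    show "inj_on (insert {u, w}) {M. perfect_matching (V - {u, w}) ?F M}"
    proof (rule inj_onI)
      fix M1 M2 assume M1: "M1 \<in> {M. perfect_matching (V - {u, w}) ?F M}"
        and M2: "M2 \<in> {M. perfect_matching (V - {u, w}) ?F M}"
        and eq: "insert {u,w} M1 = insert {u,w} M2"
      have "{u,w} \<notin> M1" "{u,w} \<notin> M2" using M1 M2 unfolding perfect_matching_def by auto
      then show "M1 = M2" using eq by (metis insert_ident)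
    qed
  qed
  have finS: "finite (S w)" for w
    unfolding S_def using fin_pm[of "V - {u,w}"] Suc.prems(1) by auto
  have "fact (Suc m) = Suc m * fact m" by simp
  also have "\<dots> \<le> card W * fact m" using cardW by (intro mult_right_mono) auto
  also have "\<dots> = (\<Sum>w\<in>W. fact m)" by simp
  also have "\<dots> \<le> (\<Sum>w\<in>W. card (S w))"
    by (intro sum_mono) (simp add: cardS IHw)
  also have "\<dots> = card (\<Union>w\<in>W. S w)"
    by (rule card_UN_disjoint[symmetric]) (use finW finS disjS in auto)
  also have "\<dots> \<le> card {M. perfect_matching V ?F M}"
    by (rule card_mono[OF fin_pm[OF Suc.prems(1)] sub])
  finally show ?case .
qed

theorem lemma27:
  fixes V :: "'a set" and E :: "'a set set" and n :: nat
  assumes "simple_graph V E"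
    and "complete_multipartite V E"
    and "card V = 2 * n"
    and "independence_number V E \<le> n"
  shows "card {M. perfect_matching V E M} \<ge> fact n"
proof -
  have finV: "finite V" using assms(1) unfolding simple_graph_def by auto
  have Esub: "\<And>e. e \<in> E \<Longrightarrow> e \<subseteq> V \<and> card e = 2" using assms(1) unfolding simple_graph_def by auto
  obtain P where P: "(\<forall>A\<in>P. A \<noteq> {}) \<and> \<Union>P = V \<and>
          (\<forall>A\<in>P. \<forall>B\<in>P. A \<noteq> B \<longrightarrow> A \<inter> B = {}) \<and>
          (\<forall>u\<in>V. \<forall>v\<in>V. {u, v} \<in> E \<longleftrightarrow> (\<exists>A\<in>P. \<exists>B\<in>P. A \<noteq> B \<and> u \<in> A \<and> v \<in> B))"
    using assms(2) unfolding complete_multipartite_def by (rule exE)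
  have P2: "\<Union>P = V" using P by (rule conjE) (erule conjE)
  have disj: "\<forall>A\<in>P. \<forall>B\<in>P. A \<noteq> B \<longrightarrow> A \<inter> B = {}"
    using P by (elim conjE)
  have adj: "\<forall>u\<in>V. \<forall>v\<in>V. {u, v} \<in> E \<longleftrightarrow> (\<exists>A\<in>P. \<exists>B\<in>P. A \<noteq> B \<and> u \<in> A \<and> v \<in> B)"
    using P by (elim conjE)
  have bound: "card (A \<inter> V) \<le> n" if A: "A \<in> P" for A
  proof -
    have AV: "A \<subseteq> V" using A P2 by auto
    have ind: "independent_set V E A"
      unfolding independent_set_def
    proof (intro conjI ballI AV)
      fix u v assume uv: "u \<in> A" "v \<in> A"
      show "{u, v} \<notin> E"
      proof
        assume "{u,v} \<in> E"
        moreover have "u \<in> V" "v \<in> V" using uv AV by auto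
        ultimately have "\<exists>A'\<in>P. \<exists>B'\<in>P. A' \<noteq> B' \<and> u \<in> A' \<and> v \<in> B'"
          using adj by simp
        then obtain A' B' where AB: "A' \<in> P" "B' \<in> P" "A' \<noteq> B'" "u \<in> A'" "v \<in> B'"
          by blast
        have "A' = A" using disj AB(1,4) A uv(1) by blast
        moreover have "B' = A" using disj AB(2,5) A uv(2) by blast
        ultimately show False using AB(3) by simp
      qed
    qed
    have fin: "finite (card ` {S. independent_set V E S})"
    proof -
      have "{S. independent_set V E S} \<subseteq> Pow V" unfolding independent_set_def by auto
      then show ?thesis using finV by (meson finite_Pow_iff finite_imageI finite_subset)
    qed
    have "card A \<le> independence_number V E"
      unfolding independence_number_def using fin ind by (intro Max_ge) auto
    then show ?thesis using assms(4) AV by (simp add: Int_absorb2)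
  qed
  have eqM: "{M. perfect_matching V E M} = {M. perfect_matching V (cm_edges P) M}"
  proof (intro Collect_cong iffI)
    fix M assume pm: "perfect_matching V E M"
    have "M \<subseteq> cm_edges P"
    proof
      fix e assume e: "e \<in> M"
      have eE: "e \<in> E" using pm e unfolding perfect_matching_def by blast
      have eV: "e \<subseteq> V" and c2: "card e = 2" using Esub[OF eE] by auto
      obtain u v where uv0: "e = {u,v}" using c2 unfolding card_2_iff by blast
      have hu: "u \<in> V" and hv: "v \<in> V" using eV uv0 by auto
      have "\<exists>A\<in>P. \<exists>B\<in>P. A \<noteq> B \<and> u \<in> A \<and> v \<in> B"
        using adj hu hv eE uv0 by simp
      then show "e \<in> cm_edges P" unfolding cm_edges_def uv0 by blast
    qed
    then show "perfect_matching V (cm_edges P) M" using pm unfolding perfect_matching_def by auto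
  next
    fix M assume pm: "perfect_matching V (cm_edges P) M"
    have "M \<subseteq> E"
    proof
      fix e assume e: "e \<in> M"
      then have "e \<in> cm_edges P" using pm unfolding perfect_matching_def by auto
      then have "\<exists>u v. e = {u,v} \<and> (\<exists>A\<in>P. \<exists>B\<in>P. A \<noteq> B \<and> u \<in> A \<and> v \<in> B)"
        unfolding cm_edges_def by simp
      then obtain u v A B where uv: "e = {u,v}" "A \<in> P" "B \<in> P" "A \<noteq> B" "u \<in> A" "v \<in> B"
        by blast
      have "e \<subseteq> V" using e pm unfolding perfect_matching_def by auto
      have hu: "u \<in> V" and hv: "v \<in> V" using \<open>e \<subseteq> V\<close> uv(1) by auto
      have "\<exists>A\<in>P. \<exists>B\<in>P. A \<noteq> B \<and> u \<in> A \<and> v \<in> B" using uv by blast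
      then show "e \<in> E" using adj hu hv uv(1) by simp
    qed
    then show "perfect_matching V E M" using pm unfolding perfect_matching_def by auto
  qed
  show ?thesis unfolding eqM
    using main[OF disj finV assms(3)] P2 bound by auto
qed

end
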